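(* In the incomplete-information network formation process (agents playing the SOE each period, beliefs following the simple updating rule), for every type vector $\kappa$: (1) If $\mathbb{E}[f(x)]<c$, information never becomes complete: no link ever forms and all agents' beliefs about others' types stay at the prior forever. (2) If $\mathbb{E}[f(x)]\ge c$, then with probability one information becomes complete within finitely many periods, and in every stable network (together with its associated beliefs) information is complete.
   Context: Model. There are $N\ge 2$ agents $I=\{1,\dots,N\}$. Each agent $i$ has a private type $k_i\in X$; types are drawn i.i.d. from a prior distribution $H$ on $X$, and $\kappa=(k_1,\dots,k_N)$ is the type vector. There is a function $f:X\to\mathbb{R}_{>0}$, a link cost $c>0$ and a decay factor $\delta\in(0,1)$; $\mathbb{E}[f(x)]=\int_X f\,dH$ is assumed well defined. A network ${\bf g}$ is a set of unordered pairs $ij$ ($i\neq j$), called links. Agents $i,j$ are connected in ${\bf g}$ if there is a path of links between them; $d_{ij}$ is the length of a shortest such path ($\infty$ if not connected); $C_i$ denotes the component of ${\bf g}$ containing $i$. Agent $i$'s payoff is $u_i({\bf g})=\sum_{j\neq i,\ j\text{ connected to }i}\delta^{d_{ij}-1}f(k_j)-c\cdot\#\{j: ij\in{\bf g}\}$. Dynamics. The network is empty at $t=0$. In each period $t\ge1$ one unordered pair $(i,j)$ is selected uniformly at random (probability $2/(N(N-1))$), independently over periods; the sequence of selected pairs up to $t$ is the selection path $\gamma(t)$. The selected agents observe each other's components and simultaneously choose $a_{ij},a_{ji}\in\{0,1\}$ (1 = agree to form the link if absent / keep it if present, 0 = refuse / sever); after the period the link $ij$ is present iff $a_{ij}=a_{ji}=1$.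 Agents are myopic and play the stable optimistic equilibrium (SOE): agent $i$ chooses $1$ iff his expected current payoff (w.r.t. his belief $B_i$) from the network resulting with the link $ij$ is at least his current payoff without it. Information. Under complete information every agent knows $\kappa$. Under incomplete information (simple updating rule), if $i$ and $j$ have ever been connected at some period so far, each knows the other's type; otherwise each one's belief about the other's type is the prior $H$. Information is complete when every agent's belief is degenerate on the true $\kappa$, and incomplete otherwise. Stability. Given a selection path, the resulting network ${\bf g}(\gamma(t))$ and beliefs $B(\gamma(t))$ are uniquely determined. A pair $({\bf g},B)$ is a stable network if no link is formed or severed along any subsequent selection path. *)

theory Defs
  imports "HOL-Probability.Probability"
begin

text \<open>Agents are the natural numbers 0,...,N-1. A network is a set of links,
each link being a two-element set {i,j} of agents.\<close>

text \<open>Unordered pairs of distinct agents, represented as (i,j) with i < j.\<close>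
definition Pairs :: "nat \<Rightarrow> (nat \<times> nat) set" where
  "Pairs N = {(i, j). i < j \<and> j < N}"

definition adj_rel :: "nat set set \<Rightarrow> (nat \<times> nat) set" where
  "adj_rel g = {(a, b). a \<noteq> b \<and> {a, b} \<in> g}"

definition conn :: "nat set set \<Rightarrow> nat \<Rightarrow> nat \<Rightarrow> bool" where
  "conn g a b \<longleftrightarrow> (a, b) \<in> (adj_rel g)\<^sup>*"

definition dist :: "nat set set \<Rightarrow> nat \<Rightarrow> nat \<Rightarrow> nat" where
  "dist g a b = (LEAST n. (a, b) \<in> adj_rel g ^^ n)"

text \<open>Knowledge relation K (simple updating rule): (i,j) \<in> K iff i knows j's type,
  otherwise i's belief about j's type is the prior H, whose mean of f is e.\<close>
definition exp_payoff ::
  "nat \<Rightarrow> real \<Rightarrow> real \<Rightarrow> ('x \<Rightarrow> real) \<Rightarrow> (nat \<Rightarrow> 'x) \<Rightarrow> real \<Rightarrow>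
   nat set set \<Rightarrow> (nat \<times> nat) set \<Rightarrow> nat \<Rightarrow> real" where
  "exp_payoff N \<delta> c f \<kappa> e g K i =
     (\<Sum>j \<in> {j. j < N \<and> j \<noteq> i \<and> conn g i j}.
        \<delta> ^ (dist g i j - 1) * (if (i, j) \<in> K then f (\<kappa> j) else e))
     - c * real (card {j. j < N \<and> j \<noteq> i \<and> {i, j} \<in> g})"

text \<open>One period: pair (i,j) is selected; each agent agrees iff his expected payoff
  with the link is at least that without it (SOE, myopic); the link is present iff
  both agree; then everyone connected in the new network learns each other's type.\<close>
definition step ::
  "nat \<Rightarrow> real \<Rightarrow> real \<Rightarrow> ('x \<Rightarrow> real) \<Rightarrow> (nat \<Rightarrow> 'x) \<Rightarrow> real \<Rightarrow>
   nat set set \<times> (nat \<times> nat) set \<Rightarrow> nat \<times> nat \<Rightarrow> nat set set \<times> (nat \<times> nat) set" where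
  "step N \<delta> c f \<kappa> e st p =
     (let g = fst st; K = snd st; i = fst p; j = snd p;
          g1 = g \<union> {{i, j}}; g0 = g - {{i, j}};
          ai = (exp_payoff N \<delta> c f \<kappa> e g1 K i \<ge> exp_payoff N \<delta> c f \<kappa> e g0 K i);
          aj = (exp_payoff N \<delta> c f \<kappa> e g1 K j \<ge> exp_payoff N \<delta> c f \<kappa> e g0 K j);
          g' = (if ai \<and> aj then g1 else g0)
      in (g', K \<union> {(a, b). a \<noteq> b \<and> conn g' a b}))"

text \<open>Running the process from state st along selection path \<gamma>
  (\<gamma> t is the pair selected in period t+1).\<close>
primrec run ::
  "nat \<Rightarrow> real \<Rightarrow> real \<Rightarrow> ('x \<Rightarrow> real) \<Rightarrow> (nat \<Rightarrow> 'x) \<Rightarrow> real \<Rightarrow>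
   nat set set \<times> (nat \<times> nat) set \<Rightarrow> (nat \<Rightarrow> nat \<times> nat) \<Rightarrow> nat \<Rightarrow> nat set set \<times> (nat \<times> nat) set" where
  "run N \<delta> c f \<kappa> e st \<gamma> 0 = st"
| "run N \<delta> c f \<kappa> e st \<gamma> (Suc t) = step N \<delta> c f \<kappa> e (run N \<delta> c f \<kappa> e st \<gamma> t) (\<gamma> t)"

definition state ::
  "nat \<Rightarrow> real \<Rightarrow> real \<Rightarrow> ('x \<Rightarrow> real) \<Rightarrow> (nat \<Rightarrow> 'x) \<Rightarrow> real \<Rightarrow>
   (nat \<Rightarrow> nat \<times> nat) \<Rightarrow> nat \<Rightarrow> nat set set \<times> (nat \<times> nat) set" where
  "state N \<delta> c f \<kappa> e \<gamma> t = run N \<delta> c f \<kappa> e ({}, {}) \<gamma> t"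

definition valid_path :: "nat \<Rightarrow> (nat \<Rightarrow> nat \<times> nat) \<Rightarrow> bool" where
  "valid_path N \<gamma> \<longleftrightarrow> (\<forall>t. \<gamma> t \<in> Pairs N)"

definition complete_info :: "nat \<Rightarrow> (nat \<times> nat) set \<Rightarrow> bool" where
  "complete_info N K \<longleftrightarrow> (\<forall>i<N. \<forall>j<N. i \<noteq> j \<longrightarrow> (i, j) \<in> K)"

definition stable ::
  "nat \<Rightarrow> real \<Rightarrow> real \<Rightarrow> ('x \<Rightarrow> real) \<Rightarrow> (nat \<Rightarrow> 'x) \<Rightarrow> real \<Rightarrow>
   nat set set \<times> (nat \<times> nat) set \<Rightarrow> bool" where
  "stable N \<delta> c f \<kappa> e st \<longleftrightarrow>
     (\<forall>\<gamma>. valid_path N \<gamma> \<longrightarrow> (\<forall>t. fst (run N \<delta> c f \<kappa> e st \<gamma> t) = fst st))"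

definition path_measure :: "nat \<Rightarrow> (nat \<Rightarrow> nat \<times> nat) measure" where
  "path_measure N = PiM UNIV (\<lambda>_::nat. measure_pmf (pmf_of_set (Pairs N)))"

end

theory Submission
  imports Defs
begin

lemma adj_sym: "(a,b) \<in> adj_rel g \<Longrightarrow> (b,a) \<in> adj_rel g"
  by (auto simp: adj_rel_def insert_commute)

lemma conn_sym: "conn g a b \<Longrightarrow> conn g b a"
proof -
  have "sym (adj_rel g)" by (auto simp: sym_def intro: adj_sym)
  then have "sym ((adj_rel g)\<^sup>*)" by (rule sym_rtrancl)
  then show "conn g a b \<Longrightarrow> conn g b a" unfolding conn_def by (auto simp: sym_def)
qed

lemma conn_mono: "g \<subseteq> g' \<Longrightarrow> conn g a b \<Longrightarrow> conn g' a b"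
proof -
  assume "g \<subseteq> g'" "conn g a b"
  have "adj_rel g \<subseteq> adj_rel g'" using \<open>g \<subseteq> g'\<close> by (auto simp: adj_rel_def)
  then show ?thesis using \<open>conn g a b\<close> unfolding conn_def by (meson rtrancl_mono subsetD)
qed

lemma conn_link: "{a,b} \<in> g \<Longrightarrow> a \<noteq> b \<Longrightarrow> conn g a b"
  unfolding conn_def adj_rel_def by auto

lemma conn_empty: "conn {} a b \<Longrightarrow> a = b"
  unfolding conn_def adj_rel_def by auto

lemma relpow_mono': "(R::('a\<times>'a) set) \<subseteq> S \<Longrightarrow> R ^^ n \<subseteq> S ^^ n"
proof (induction n)
  case 0 then show ?case by simp
next
  case (Suc n) then show ?case by (simp add: relcomp_mono)
qed

lemma dist_mono:
  assumes "g \<subseteq> g'" "conn g a b"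
  shows "dist g' a b \<le> dist g a b"
proof -
  from assms(2) obtain n where n: "(a,b) \<in> adj_rel g ^^ n"
    unfolding conn_def using rtrancl_power by blast
  have 1: "(a,b) \<in> adj_rel g ^^ (dist g a b)"
    unfolding dist_def by (rule LeastI[of _ n]) (rule n)
  have "adj_rel g \<subseteq> adj_rel g'" using assms(1) by (auto simp: adj_rel_def)
  then have "(a,b) \<in> adj_rel g' ^^ (dist g a b)" using 1 relpow_mono' by blast
  then show ?thesis unfolding dist_def by (rule Least_le)
qed

lemma dist_link: "{a,b} \<in> g \<Longrightarrow> a \<noteq> b \<Longrightarrow> dist g a b = 1"
proof -
  assume h: "{a,b} \<in> g" "a \<noteq> b"
  have "(a,b) \<in> adj_rel g ^^ 1" using h by (auto simp: adj_rel_def)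
  moreover have "\<not> (a,b) \<in> adj_rel g ^^ 0" using h by auto
  moreover have "1 \<le> m" if "(a,b) \<in> adj_rel g ^^ m" for m
    using that h by (cases m) auto
  ultimately show ?thesis unfolding dist_def
    by (intro Least_equality) auto
qed

lemma gain:
  assumes ij: "i \<noteq> j" "i < N" "j < N" and K: "(i,j) \<notin> K"
    and nc: "\<not> conn g i j" and nl: "{i,j} \<notin> g"
    and d: "0 < \<delta>" "\<delta> < 1" and ce: "c \<le> e" "0 < c"
    and fpos: "\<forall>k<N. 0 < f (\<kappa> k)"
  shows "exp_payoff N \<delta> c f \<kappa> e g K i \<le> exp_payoff N \<delta> c f \<kappa> e (g \<union> {{i,j}}) K i"
proof -
  define g1 where "g1 = g \<union> {{i,j}}"
  define w where "w h k = \<delta> ^ (dist h i k - 1) * (if (i, k) \<in> K then f (\<kappa> k) else e)" for h k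
  define S0 where "S0 = {k. k < N \<and> k \<noteq> i \<and> conn g i k}"
  define S1 where "S1 = {k. k < N \<and> k \<noteq> i \<and> conn g1 i k}"
  define C0 where "C0 = {k. k < N \<and> k \<noteq> i \<and> {i, k} \<in> g}"
  define C1 where "C1 = {k. k < N \<and> k \<noteq> i \<and> {i, k} \<in> g1}"
  have gsub: "g \<subseteq> g1" by (auto simp: g1_def)
  have wnn: "0 \<le> w h k" if "k < N" for h k
    using d ce fpos that by (auto simp: w_def)
  have S01: "S0 \<subseteq> S1" using conn_mono[OF gsub] by (auto simp: S0_def S1_def)
  have jS1: "j \<in> S1" using ij conn_link[of i j g1] by (auto simp: S1_def g1_def)
  have jS0: "j \<notin> S0" using nc by (auto simp: S0_def)
  have fS1: "finite S1" by (rule finite_subset[of _ "{..<N}"]) (auto simp: S1_def)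
  have wj: "w g1 j = e" using dist_link[of i j g1] ij K by (auto simp: w_def g1_def)
  have w01: "w g k \<le> w g1 k" if "k \<in> S0" for k
  proof -
    have "dist g1 i k \<le> dist g i k" using dist_mono[OF gsub] that by (auto simp: S0_def)
    then have "\<delta> ^ (dist g i k - 1) \<le> \<delta> ^ (dist g1 i k - 1)"
      using d by (intro power_decreasing) auto
    moreover have "0 \<le> (if (i, k) \<in> K then f (\<kappa> k) else e)" using that fpos ce
      by (auto simp: S0_def less_imp_le)
    ultimately show ?thesis unfolding w_def by (rule mult_right_mono)
  qed
  have "sum (w g) S0 + e \<le> sum (w g1) S0 + w g1 j"
    using wj sum_mono[of S0 "w g" "w g1", OF w01] by simp
  also have "\<dots> = sum (w g1) (insert j S0)"
    using jS0 fS1 S01 by (simp add: finite_subset)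
  also have "\<dots> \<le> sum (w g1) S1"
    using S01 jS1 fS1 wnn by (intro sum_mono2) (auto simp: S1_def)
  finally have sums: "sum (w g) S0 + e \<le> sum (w g1) S1" .
  have C1: "C1 = insert j C0" using ij by (auto simp: C0_def C1_def g1_def doubleton_eq_iff)
  have jC0: "j \<notin> C0" using nl by (auto simp: C0_def)
  have fC0: "finite C0" by (rule finite_subset[of _ "{..<N}"]) (auto simp: C0_def)
  have cards: "card C1 = card C0 + 1" using C1 jC0 fC0 by simp
  have e0: "exp_payoff N \<delta> c f \<kappa> e g K i = sum (w g) S0 - c * real (card C0)"
    unfolding exp_payoff_def w_def S0_def C0_def by simp
  have e1: "exp_payoff N \<delta> c f \<kappa> e g1 K i = sum (w g1) S1 - c * real (card C1)"
    unfolding exp_payoff_def w_def S1_def C1_def by simp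
  show ?thesis using e0 e1 cards sums ce unfolding g1_def[symmetric] by (simp add: algebra_simps)
qed

definition inv :: "nat set set \<Rightarrow> (nat \<times> nat) set \<Rightarrow> bool" where
  "inv g K \<longleftrightarrow> (\<forall>a b. a \<noteq> b \<and> conn g a b \<longrightarrow> (a,b) \<in> K) \<and> (\<forall>a b. (a,b) \<in> K \<longrightarrow> (b,a) \<in> K)"

lemma inv_symD: "inv g K \<Longrightarrow> (a,b) \<in> K \<Longrightarrow> (b,a) \<in> K"
  unfolding inv_def by blast

lemma inv_connD: "inv g K \<Longrightarrow> a \<noteq> b \<Longrightarrow> conn g a b \<Longrightarrow> (a,b) \<in> K"
  unfolding inv_def by blast

lemma snd_step: "snd (step N \<delta> c f \<kappa> e st p) = snd st \<union> {(a,b). a \<noteq> b \<and> conn (fst (step N \<delta> c f \<kappa> e st p)) a b}"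
  by (simp add: step_def Let_def)

lemma step_inv: "inv (fst st) (snd st) \<Longrightarrow> inv (fst (step N \<delta> c f \<kappa> e st p)) (snd (step N \<delta> c f \<kappa> e st p))"
  unfolding inv_def snd_step by (auto dest: conn_sym)

lemma state_inv: "inv (fst (state N \<delta> c f \<kappa> e \<gamma> t)) (snd (state N \<delta> c f \<kappa> e \<gamma> t))"
proof (induction t)
  case 0 then show ?case by (auto simp: state_def inv_def dest: conn_empty)
next
  case (Suc t) then show ?case unfolding state_def by (simp add: step_inv)
qed

lemma K_mono: "s \<le> t \<Longrightarrow> snd (state N \<delta> c f \<kappa> e \<gamma> s) \<subseteq> snd (state N \<delta> c f \<kappa> e \<gamma> t)"
proof -
  assume "s \<le> t"
  have "\<And>n. snd (state N \<delta> c f \<kappa> e \<gamma> n) \<subseteq> snd (state N \<delta> c f \<kappa> e \<gamma> (Suc n))"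
    unfolding state_def by (simp add: snd_step)
  then show ?thesis using \<open>s \<le> t\<close> by (rule lift_Suc_mono_le)
qed

lemma link_forms:
  assumes inv: "inv g K" and ij: "i \<noteq> j" "i < N" "j < N" and K: "(i,j) \<notin> K"
    and d: "0 < \<delta>" "\<delta> < 1" and ce: "c \<le> e" "0 < c"
    and fpos: "\<forall>k<N. 0 < f (\<kappa> k)"
  shows "fst (step N \<delta> c f \<kappa> e (g, K) (i, j)) = g \<union> {{i,j}}" and "{i,j} \<notin> g"
proof -
  have K2: "(j,i) \<notin> K" using inv K inv_symD by blast
  have nc: "\<not> conn g i j" using inv K ij inv_connD by blast
  have nc2: "\<not> conn g j i" using nc conn_sym by blast
  show nl: "{i,j} \<notin> g" using nc conn_link ij by blast
  have nl2: "{j,i} \<notin> g" using nl by (simp add: insert_commute)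
  have a1: "exp_payoff N \<delta> c f \<kappa> e g K i \<le> exp_payoff N \<delta> c f \<kappa> e (g \<union> {{i,j}}) K i"
    by (rule gain[of i j N K g \<delta> c e f \<kappa>, OF ij K nc nl d ce fpos])
  have a2: "exp_payoff N \<delta> c f \<kappa> e g K j \<le> exp_payoff N \<delta> c f \<kappa> e (g \<union> {{j,i}}) K j"
    using ij by (intro gain[of j i N K g \<delta> c e f \<kappa>, OF _ _ _ K2 nc2 nl2 d ce fpos]) auto
  have g0: "g - {{i,j}} = g" using nl by auto
  show "fst (step N \<delta> c f \<kappa> e (g, K) (i, j)) = g \<union> {{i,j}}"
    using a1 a2 g0 by (simp add: step_def Let_def insert_commute)
qed

lemma pair_known:
  assumes ij: "i \<noteq> j" "i < N" "j < N" and gt: "\<gamma> t = (i,j)"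
    and d: "0 < \<delta>" "\<delta> < 1" and ce: "c \<le> e" "0 < c"
    and fpos: "\<forall>k<N. 0 < f (\<kappa> k)"
  shows "(i,j) \<in> snd (state N \<delta> c f \<kappa> e \<gamma> (Suc t)) \<and> (j,i) \<in> snd (state N \<delta> c f \<kappa> e \<gamma> (Suc t))"
proof -
  let ?st = "state N \<delta> c f \<kappa> e \<gamma> t"
  have inv: "inv (fst ?st) (snd ?st)" by (rule state_inv)
  have sS: "state N \<delta> c f \<kappa> e \<gamma> (Suc t) = step N \<delta> c f \<kappa> e ?st (i,j)"
    using gt by (simp add: state_def)
  have "(i,j) \<in> snd (state N \<delta> c f \<kappa> e \<gamma> (Suc t))"
  proof (cases "(i,j) \<in> snd ?st")
    case True then show ?thesis using K_mono[of t "Suc t" N \<delta> c f \<kappa> e \<gamma>] by auto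
  next
    case False
    have "fst (step N \<delta> c f \<kappa> e (fst ?st, snd ?st) (i, j)) = fst ?st \<union> {{i,j}}"
      by (rule link_forms(1)[of "fst ?st" "snd ?st" i j N \<delta> c e f \<kappa>, OF inv ij False d ce fpos])
    then have "conn (fst (state N \<delta> c f \<kappa> e \<gamma> (Suc t))) i j"
      using sS ij conn_link[of i j] by simp
    then show ?thesis using ij by (simp add: sS snd_step)
  qed
  moreover have "inv (fst (state N \<delta> c f \<kappa> e \<gamma> (Suc t))) (snd (state N \<delta> c f \<kappa> e \<gamma> (Suc t)))"
    by (rule state_inv)
  ultimately show ?thesis using inv_symD by blast
qed

lemma conn_single: "conn {{i,j}} a b \<Longrightarrow> a \<in> {i,j} \<Longrightarrow> b \<in> {i,j}"
  unfolding conn_def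
proof (induction rule: rtrancl_induct)
  case base then show ?case by simp
next
  case (step y z) then show ?case by (auto simp: adj_rel_def doubleton_eq_iff)
qed

lemma empty_step:
  assumes ij: "i < j" "j < N" and ec: "e < c"
  shows "step N \<delta> c f \<kappa> e ({}, {}) (i, j) = ({}, {})"
proof -
  have S: "{k. k < N \<and> k \<noteq> i \<and> conn {{i,j}} i k} = {j}"
    using ij conn_single[of i j i] conn_link[of i j "{{i,j}}"] by auto
  have C: "{k. k < N \<and> k \<noteq> i \<and> {i, k} \<in> {{i,j}}} = {j}"
    using ij by (auto simp: doubleton_eq_iff)
  have dd: "dist {{i,j}} i j = 1" using ij by (intro dist_link) auto
  have p1: "exp_payoff N \<delta> c f \<kappa> e {{i,j}} {} i = e - c"
    unfolding exp_payoff_def S C using dd by simp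
  have S0: "{k. k < N \<and> k \<noteq> i \<and> conn {} i k} = {}" using conn_empty by auto
  have p0: "exp_payoff N \<delta> c f \<kappa> e {} {} i = 0"
    unfolding exp_payoff_def S0 by simp
  show ?thesis using p1 p0 ec by (auto simp: step_def Let_def dest: conn_empty)
qed

lemma part1:
  assumes "valid_path N \<gamma>" "e < c"
  shows "state N \<delta> c f \<kappa> e \<gamma> t = ({}, {})"
proof (induction t)
  case 0 then show ?case by (simp add: state_def)
next
  case (Suc t)
  obtain i j where g: "\<gamma> t = (i,j)" by fastforce
  have "(i,j) \<in> Pairs N" using assms(1) g unfolding valid_path_def by metis
  then have "i < j" "j < N" by (auto simp: Pairs_def)
  then show ?case using Suc g empty_step[OF _ _ assms(2)] by (simp add: state_def)
qed

lemma all_pairs_complete: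
  assumes all: "\<forall>p\<in>Pairs N. \<exists>t. \<gamma> t = p"
    and d: "0 < \<delta>" "\<delta> < 1" and ce: "c \<le> e" "0 < c"
    and fpos: "\<forall>k<N. 0 < f (\<kappa> k)"
  shows "\<exists>T. complete_info N (snd (state N \<delta> c f \<kappa> e \<gamma> T))"
proof -
  obtain tf where tf: "\<forall>p\<in>Pairs N. \<gamma> (tf p) = p" using bchoice[OF all] by blast
  have fin: "finite (Pairs N)"
    by (rule finite_subset[of _ "{..<N} \<times> {..<N}"]) (auto simp: Pairs_def)
  define T where "T = Max (insert 0 ((\<lambda>p. Suc (tf p)) ` Pairs N))"
  have kn: "(i,j) \<in> snd (state N \<delta> c f \<kappa> e \<gamma> T) \<and> (j,i) \<in> snd (state N \<delta> c f \<kappa> e \<gamma> T)"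
    if "i < j" "j < N" for i j
  proof -
    have p: "(i,j) \<in> Pairs N" using that by (simp add: Pairs_def)
    have "Suc (tf (i,j)) \<le> T" unfolding T_def using fin p by (intro Max_ge) auto
    moreover have "(i,j) \<in> snd (state N \<delta> c f \<kappa> e \<gamma> (Suc (tf (i,j)))) \<and> (j,i) \<in> snd (state N \<delta> c f \<kappa> e \<gamma> (Suc (tf (i,j))))"
      using that tf p d ce fpos by (intro pair_known[of i j N \<gamma> "tf (i,j)" \<delta> c e f \<kappa>]) auto
    ultimately show ?thesis using K_mono[of "Suc (tf (i,j))" T N \<delta> c f \<kappa> e \<gamma>] by auto
  qed
  show ?thesis
  proof (intro exI[of _ T], unfold complete_info_def, intro allI impI)
    fix i j assume "i < N" "j < N" "i \<noteq> j"
    then show "(i,j) \<in> snd (state N \<delta> c f \<kappa> e \<gamma> T)"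
      using kn[of i j] kn[of j i] by (cases "i < j") auto
  qed
qed

lemma pair_appears:
  assumes N: "N \<ge> 2" and p: "p \<in> Pairs N"
  shows "AE \<gamma> in path_measure N. \<exists>t. \<gamma> t = p"
proof -
  define M where "M = measure_pmf (pmf_of_set (Pairs N))"
  have fin: "finite (Pairs N)"
    by (rule finite_subset[of _ "{..<N} \<times> {..<N}"]) (auto simp: Pairs_def)
  have ne: "Pairs N \<noteq> {}" using p by auto
  interpret sequence_space M unfolding M_def by unfold_locales
  have PM: "path_measure N = S" by (simp add: path_measure_def M_def)
  define E where "E = (\<lambda>_::nat. UNIV - {p})"
  have E: "\<And>i. E i \<in> sets M" by (simp add: M_def)
  define r where "r = measure M (UNIV - {p})"
  have pm: "measure M {p} = 1 / real (card (Pairs N))"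
    using fin ne p by (simp add: M_def measure_pmf_single)
  have r: "r = 1 - 1 / real (card (Pairs N))"
    unfolding r_def using M.prob_compl[of "{p}"] pm by (simp add: M_def)
  have cpos: "card (Pairs N) > 0" using fin ne by (simp add: card_gt_0_iff)
  then have r0: "0 \<le> r" "r < 1" unfolding r by (auto simp: field_simps)
  have "(\<lambda>n. \<Prod>i\<le>n. measure M (E i)) \<longlonglongrightarrow> measure S (Pi UNIV E)"
    by (rule measure_PiM_countable[OF E])
  moreover have "(\<lambda>n. \<Prod>i\<le>n. measure M (E i)) = (\<lambda>n. r ^ Suc n)"
    by (simp add: E_def r_def)
  moreover have "(\<lambda>n. r ^ Suc n) \<longlonglongrightarrow> 0"
    using r0 by (intro LIMSEQ_Suc LIMSEQ_power_zero) auto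
  ultimately have m0: "measure S (Pi UNIV E) = 0" by (metis LIMSEQ_unique)
  have inS: "Pi UNIV E \<in> sets S" using E by (rule infprod_in_sets)
  have "Pi UNIV E \<in> null_sets S"
    using m0 inS by (simp add: emeasure_eq_measure null_sets_def)
  moreover have "{x \<in> space S. \<not> (\<exists>t. x t = p)} \<subseteq> Pi UNIV E"
    by (auto simp: E_def)
  ultimately have "AE \<gamma> in S. \<exists>t. \<gamma> t = p" by (rule AE_I')
  then show ?thesis unfolding PM .
qed

lemma ae_complete:
  assumes N: "N \<ge> 2"
    and d: "0 < \<delta>" "\<delta> < 1" and ce: "c \<le> e" "0 < c"
    and fpos: "\<forall>k<N. 0 < f (\<kappa> k)"
  shows "AE \<gamma> in path_measure N. \<exists>T. complete_info N (snd (state N \<delta> c f \<kappa> e \<gamma> T))"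
proof -
  have fin: "finite (Pairs N)"
    by (rule finite_subset[of _ "{..<N} \<times> {..<N}"]) (auto simp: Pairs_def)
  have cnt: "countable (Pairs N)" using fin by (rule countable_finite)
  have "AE \<gamma> in path_measure N. \<forall>p\<in>Pairs N. \<exists>t. \<gamma> t = p"
    unfolding AE_ball_countable[OF cnt] using pair_appears[OF N] by blast
  then show ?thesis
  proof (rule AE_mp, intro AE_I2 impI)
    fix \<gamma> :: "nat \<Rightarrow> nat \<times> nat"
    assume "\<forall>p\<in>Pairs N. \<exists>t. \<gamma> t = p"
    then show "\<exists>T. complete_info N (snd (state N \<delta> c f \<kappa> e \<gamma> T))"
      by (rule all_pairs_complete[of N \<gamma> \<delta> c e f \<kappa>, OF _ d ce fpos])
  qed
qed

lemma stable_complete: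
  assumes d: "0 < \<delta>" "\<delta> < 1" and ce: "c \<le> e" "0 < c"
    and fpos: "\<forall>k<N. 0 < f (\<kappa> k)"
    and st: "stable N \<delta> c f \<kappa> e (state N \<delta> c f \<kappa> e \<gamma> t)"
  shows "complete_info N (snd (state N \<delta> c f \<kappa> e \<gamma> t))"
proof (rule ccontr)
  let ?st = "state N \<delta> c f \<kappa> e \<gamma> t"
  assume "\<not> complete_info N (snd ?st)"
  then obtain i j where ij: "i < N" "j < N" "i \<noteq> j" "(i,j) \<notin> snd ?st"
    unfolding complete_info_def by blast
  have inv: "inv (fst ?st) (snd ?st)" by (rule state_inv)
  define a where "a = min i j"
  define b where "b = max i j"
  have ab: "a < b" "b < N" "a \<noteq> b" "a < N" using ij by (auto simp: a_def b_def)
  have ji: "(j,i) \<notin> snd ?st" using ij(4) inv inv_symD[of "fst ?st" "snd ?st" j i] by blast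
  have abK: "(a,b) \<notin> snd ?st" using ij(3) ij(4) ji by (cases "i < j") (simp_all add: a_def b_def min_def max_def)
  have vp: "valid_path N (\<lambda>_. (a,b))" using ab by (simp add: valid_path_def Pairs_def)
  have "fst (run N \<delta> c f \<kappa> e ?st (\<lambda>_. (a,b)) 1) = fst ?st"
  proof -
    have "\<forall>t'. fst (run N \<delta> c f \<kappa> e ?st (\<lambda>_. (a,b)) t') = fst ?st"
      using st vp unfolding stable_def by blast
    then show ?thesis by (rule spec)
  qed
  moreover have "run N \<delta> c f \<kappa> e ?st (\<lambda>_. (a,b)) 1 = step N \<delta> c f \<kappa> e (fst ?st, snd ?st) (a,b)"
    by simp
  moreover have "fst (step N \<delta> c f \<kappa> e (fst ?st, snd ?st) (a,b)) = fst ?st \<union> {{a,b}}"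
    "{a,b} \<notin> fst ?st"
    using link_forms[of "fst ?st" "snd ?st" a b N \<delta> c e f \<kappa>, OF inv ab(3) ab(4) ab(2) abK d ce fpos]
    by blast+
  ultimately show False by (metis Un_insert_right insert_absorb2 sup_bot.right_neutral insertI1 Un_iff)
qed

theorem proposition1:
  fixes N :: nat and \<delta> c :: real and H :: "'x measure"
    and f :: "'x \<Rightarrow> real" and \<kappa> :: "nat \<Rightarrow> 'x"
  assumes "N \<ge> 2" and "0 < \<delta>" and "\<delta> < 1" and "0 < c"
    and "prob_space H" and "integrable H f"
    and "\<forall>x \<in> space H. 0 < f x"
    and "\<forall>i < N. \<kappa> i \<in> space H"
  shows "(integral\<^sup>L H f < c \<longrightarrow>
            (\<forall>\<gamma>. valid_path N \<gamma> \<longrightarrow>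
               (\<forall>t. fst (state N \<delta> c f \<kappa> (integral\<^sup>L H f) \<gamma> t) = {}
                  \<and> snd (state N \<delta> c f \<kappa> (integral\<^sup>L H f) \<gamma> t) = {}
                  \<and> \<not> complete_info N (snd (state N \<delta> c f \<kappa> (integral\<^sup>L H f) \<gamma> t)))))
       \<and> (c \<le> integral\<^sup>L H f \<longrightarrow>
            (AE \<gamma> in path_measure N.
               \<exists>t. complete_info N (snd (state N \<delta> c f \<kappa> (integral\<^sup>L H f) \<gamma> t)))
            \<and> (\<forall>\<gamma>. valid_path N \<gamma> \<longrightarrow>
                 (\<forall>t. stable N \<delta> c f \<kappa> (integral\<^sup>L H f) (state N \<delta> c f \<kappa> (integral\<^sup>L H f) \<gamma> t)
                     \<longrightarrow> complete_info N (snd (state N \<delta> c f \<kappa> (integral\<^sup>L H f) \<gamma> t)))))"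
proof -
  note A = assms
  have fpos: "\<forall>k<N. 0 < f (\<kappa> k)" using A(7) A(8) by auto
  show ?thesis
  proof (intro conjI impI allI)
    fix \<gamma> t assume lt: "integral\<^sup>L H f < c" and vp: "valid_path N \<gamma>"
    have s: "state N \<delta> c f \<kappa> (integral\<^sup>L H f) \<gamma> t = ({}, {})" by (rule part1[OF vp lt])
    have "\<not> complete_info N {}"
    proof
      assume h: "complete_info N {}"
      have "(0::nat, 1::nat) \<in> {}" using h[unfolded complete_info_def, rule_format, of 0 1] A(1) by simp
      then show False by simp
    qed
    then show "fst (state N \<delta> c f \<kappa> (integral\<^sup>L H f) \<gamma> t) = {}"
      "snd (state N \<delta> c f \<kappa> (integral\<^sup>L H f) \<gamma> t) = {}"
      "\<not> complete_info N (snd (state N \<delta> c f \<kappa> (integral\<^sup>L H f) \<gamma> t))"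
      using s by auto
  next
    assume ce: "c \<le> integral\<^sup>L H f"
    show "AE \<gamma> in path_measure N. \<exists>t. complete_info N (snd (state N \<delta> c f \<kappa> (integral\<^sup>L H f) \<gamma> t))"
      by (rule ae_complete[of N \<delta> c "integral\<^sup>L H f" f \<kappa>, OF A(1) A(2) A(3) ce A(4) fpos])
    fix \<gamma> t assume "valid_path N \<gamma>"
      "stable N \<delta> c f \<kappa> (integral\<^sup>L H f) (state N \<delta> c f \<kappa> (integral\<^sup>L H f) \<gamma> t)"
    then show "complete_info N (snd (state N \<delta> c f \<kappa> (integral\<^sup>L H f) \<gamma> t))"
      using stable_complete[of \<delta> c "integral\<^sup>L H f" N f \<kappa>, OF A(2) A(3) ce A(4) fpos] by blast
  qed
qed

end
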